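(* Suppose a HIRB tree with $n$ items has height $H\ge\log_\beta n$, and let $X$ be the total number of nodes in the HIRB, a random variable over the choice of hash function in initializing the HIRB. Then for any $m\ge 1$, $$\Pr[X\ge H+4n+m]<0.883^m.$$
   Context: HIRB tree: parameters an integer $\beta$ (expected branching factor) and height $H$; labels are hashed by a hash function chosen (salted) at initialization, and each label receives a height $\mathsf{chooseheight}(\mathsf{label})\in\{0,\dots,H\}$ derived pseudorandomly from its hash. The HIRB is a rooted search tree with levels $H$ (root) down to $0$ (leaves), storing items sorted by label hash, such that for each level $\ell$ the nodes at level $\ell$ correspond to the intervals into which the hashes of items of height $>\ell$ partition the hash space, each such node containing exactly the items of height $\ell$ whose hash lies in its interval; a node with $k-1$ items has $k$ children. The empty HIRB is a chain of $H+1$ nodes. Standing assumption (Assumption 1): for any $n$ distinct labels stored in a HIRB, their heights are independent random samples from a geometric distribution with probability $(\beta-1)/\beta$ truncated to $\{0,1,\dots,H\}$ (i.e., $\Pr[\text{height}\ge i]=\beta^{-i}$ for $0\le i\le H$), the randomness coming entirely from the random oracle and random function chosen at creation of the HIRB. *)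

theory Defs
  imports "HOL-Probability.Probability"
begin

text \<open>Height distribution of a single label: geometric with success probability
  (beta-1)/beta (so Pr[h >= i] = beta^(-i)), truncated to {0..H} (mass above H is put on H).\<close>
definition hirb_height_pmf :: "nat \<Rightarrow> nat \<Rightarrow> nat pmf" where
  "hirb_height_pmf \<beta> H = map_pmf (\<lambda>k. min k H) (geometric_pmf ((real \<beta> - 1) / real \<beta>))"

definition hirb_heights_pmf :: "nat \<Rightarrow> nat \<Rightarrow> nat \<Rightarrow> (nat \<Rightarrow> nat) pmf" where
  "hirb_heights_pmf \<beta> H n = Pi_pmf {..<n} 0 (\<lambda>_. hirb_height_pmf \<beta> H)"

text \<open>Nodes at level l of the HIRB storing items 0..n-1 with (distinct) hashes hsh i and
  heights h i: the intervals into which the hashes of the items of height > l partition the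
  hash space. Each interval is identified by its lower boundary: None (the leftmost interval,
  unbounded below) or Some s for a separating hash s.\<close>
definition hirb_level_nodes ::
  "nat \<Rightarrow> (nat \<Rightarrow> 'k::linorder) \<Rightarrow> (nat \<Rightarrow> nat) \<Rightarrow> nat \<Rightarrow> 'k option set" where
  "hirb_level_nodes n hsh h l = insert None (Some ` {hsh i | i. i < n \<and> h i > l})"

definition hirb_num_nodes ::
  "nat \<Rightarrow> nat \<Rightarrow> (nat \<Rightarrow> 'k::linorder) \<Rightarrow> (nat \<Rightarrow> nat) \<Rightarrow> nat" where
  "hirb_num_nodes H n hsh h = (\<Sum>l\<le>H. card (hirb_level_nodes n hsh h l))"

end

theory Submission
  imports Defs
begin

lemma geo_mgf:
  fixes \<beta> :: nat and t :: real
  assumes "\<beta> \<ge> 2" "1 \<le> t" "t < 2"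
  shows "(\<integral>\<^sup>+k. ennreal (t ^ k) \<partial>geometric_pmf ((real \<beta> - 1) / real \<beta>)) \<le> ennreal (1 / (2 - t))"
proof -
  define p where "p = (real \<beta> - 1) / real \<beta>"
  define q where "q = 1 / real \<beta>"
  have q: "1 - p = q" "0 < q" "q \<le> 1/2" using assms unfolding p_def q_def by (auto simp: field_simps)
  have p: "0 \<le> p" using assms unfolding p_def by auto
  have "t * q \<le> t * (1/2)" using q assms by (intro mult_left_mono) auto
  hence tq: "t * q < 1" "0 \<le> t * q" using q(2) assms by (linarith, simp)
  have s: "(\<lambda>k. p * (t*q)^k) sums (p * (1 / (1 - t*q)))"
    by (intro sums_mult geometric_sums) (use tq in auto)
  have "(\<integral>\<^sup>+k. ennreal (t ^ k) \<partial>geometric_pmf p) = (\<Sum>k. ennreal (p * (t*q)^k))"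
    unfolding nn_integral_measure_pmf nn_integral_count_space_nat
  proof (intro suminf_cong)
    fix k :: nat
    have pp: "0 < p" "p \<le> 1" using assms unfolding p_def by auto
    have "pmf (geometric_pmf p) k = q ^ k * p" using pmf_geometric[OF pp] q by simp
    thus "ennreal (pmf (geometric_pmf p) k) * ennreal (t ^ k) = ennreal (p * (t*q)^k)"
      using p q assms by (simp add: ennreal_mult'[symmetric] power_mult_distrib mult_ac)
  qed
  also have "\<dots> = ennreal (p * (1 / (1 - t*q)))"
    by (rule suminf_ennreal_eq[OF _ s]) (use p tq in auto)
  also have "p * (1 / (1 - t*q)) \<le> 1 / (2 - t)"
  proof -
    have pq: "p = 1 - q" using q by simp
    have "0 \<le> (t - 1) * (1 - 2*q)" using q assms by (intro mult_nonneg_nonneg) auto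
    hence "(1 - q) * (2 - t) \<le> 1 - t * q" by (simp add: algebra_simps)
    hence "(1 - q) / (1 - t*q) \<le> 1 / (2 - t)" using tq assms by (simp add: divide_simps)
    thus ?thesis unfolding pq by simp
  qed
  finally show ?thesis unfolding p_def by (simp add: ennreal_leI)
qed


lemma height_mgf:
  fixes \<beta> H :: nat and t :: real
  assumes "\<beta> \<ge> 2" "1 \<le> t" "t < 2"
  shows "(\<integral>\<^sup>+k. ennreal (t ^ k) \<partial>hirb_height_pmf \<beta> H) \<le> ennreal (1 / (2 - t))"
proof -
  have "(\<integral>\<^sup>+k. ennreal (t ^ k) \<partial>hirb_height_pmf \<beta> H)
      = (\<integral>\<^sup>+k. ennreal (t ^ min k H) \<partial>geometric_pmf ((real \<beta> - 1) / real \<beta>))"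
    unfolding hirb_height_pmf_def by simp
  also have "\<dots> \<le> (\<integral>\<^sup>+k. ennreal (t ^ k) \<partial>geometric_pmf ((real \<beta> - 1) / real \<beta>))"
    by (intro nn_integral_mono ennreal_leI power_increasing) (use assms in auto)
  also have "\<dots> \<le> ennreal (1 / (2 - t))" by (rule geo_mgf[OF assms])
  finally show ?thesis .
qed

lemma num_nodes_le:
  fixes hsh :: "nat \<Rightarrow> 'k::linorder"
  shows "hirb_num_nodes H n hsh h \<le> H + 1 + (\<Sum>i<n. h i)"
proof -
  have c: "card (hirb_level_nodes n hsh h l) \<le> 1 + card {i. i < n \<and> l < h i}" for l
  proof -
    have fin: "finite {i. i < n \<and> l < h i}" by auto
    have eq: "{hsh i | i. i < n \<and> h i > l} = hsh ` {i. i < n \<and> l < h i}" by auto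
    have "card (hirb_level_nodes n hsh h l) \<le> Suc (card (Some ` {hsh i | i. i < n \<and> h i > l}))"
      unfolding hirb_level_nodes_def by (rule card_insert_le_m1) auto
    also have "card (Some ` {hsh i | i. i < n \<and> h i > l}) \<le> card {i. i < n \<and> l < h i}"
      unfolding eq image_image using card_image_le[OF fin] by simp
    finally show ?thesis by simp
  qed
  have "hirb_num_nodes H n hsh h \<le> (\<Sum>l\<le>H. 1 + card {i. i < n \<and> l < h i})"
    unfolding hirb_num_nodes_def by (intro sum_mono c)
  also have "\<dots> = H + 1 + (\<Sum>l\<le>H. \<Sum>i<n. (if l < h i then 1 else 0))"
  proof -
    have cs: "card {i. i < n \<and> l < h i} = (\<Sum>i<n. (if l < h i then 1 else 0))" for l
    proof -
      have "(\<Sum>i<n. (if l < h i then 1 else 0)) = card ({..<n} \<inter> {i. l < h i})"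
        by (simp add: sum.If_cases)
      also have "{..<n} \<inter> {i. l < h i} = {i. i < n \<and> l < h i}" by auto
      finally show ?thesis by simp
    qed
    show ?thesis by (simp add: cs sum_Suc)
  qed
  also have "(\<Sum>l\<le>H. \<Sum>i<n. (if l < h i then 1 else 0)) = (\<Sum>i<n. \<Sum>l\<le>H. (if l < h i then (1::nat) else 0))"
    by (rule sum.swap)
  also have "\<dots> \<le> (\<Sum>i<n. h i)"
  proof (intro sum_mono)
    fix i
    have "(\<Sum>l\<le>H. (if l < h i then (1::nat) else 0)) = card ({..H} \<inter> {l. l < h i})"
      by (simp add: sum.If_cases)
    also have "\<dots> \<le> card {..<h i}" by (intro card_mono) auto
    finally show "(\<Sum>l\<le>H. (if l < h i then (1::nat) else 0)) \<le> h i" by simp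
  qed
  finally show ?thesis by simp
qed

theorem lemma2:
  fixes \<beta> H n m :: nat and hsh :: "nat \<Rightarrow> 'k::linorder"
  assumes "\<beta> \<ge> 2" and "n \<ge> 1"
    and "inj_on hsh {..<n}"
    and "real H \<ge> log (real \<beta>) (real n)"
    and "m \<ge> 1"
  shows "measure_pmf.prob (hirb_heights_pmf \<beta> H n)
           {h. hirb_num_nodes H n hsh h \<ge> H + 4 * n + m} < 0.883 ^ m"
proof -
  define t :: real where "t = 8/7"
  define A where "A = 4 * n + (m - 1)"
  define P where "P = hirb_heights_pmf \<beta> H n"
  define E where "E = {h. hirb_num_nodes H n hsh h \<ge> H + 4 * n + m}"
  have t: "1 \<le> t" "t < 2" "0 < t" unfolding t_def by auto
  have ind: "indicator E h \<le> ennreal ((1/t) ^ A) * (\<Prod>i<n. ennreal (t ^ h i))" for h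
  proof (cases "h \<in> E")
    case True
    hence "A \<le> (\<Sum>i<n. h i)" using num_nodes_le[of H n hsh h] assms(5)
      unfolding E_def A_def by simp
    hence "t ^ A \<le> t ^ (\<Sum>i<n. h i)" by (intro power_increasing) (use t in auto)
    hence "1 \<le> (1/t) ^ A * (\<Prod>i<n. t ^ h i)"
      using t by (simp add: power_sum power_one_over divide_simps)
    hence "ennreal 1 \<le> ennreal ((1/t) ^ A * (\<Prod>i<n. t ^ h i))" by (rule ennreal_leI)
    also have "\<dots> = ennreal ((1/t) ^ A) * (\<Prod>i<n. ennreal (t ^ h i))"
      using t by (simp add: ennreal_mult' prod_ennreal)
    finally show ?thesis using True by simp
  qed simp
  have "emeasure P E = (\<integral>\<^sup>+h. indicator E h \<partial>P)" by simp
  also have "\<dots> \<le> (\<integral>\<^sup>+h. ennreal ((1/t) ^ A) * (\<Prod>i<n. ennreal (t ^ h i)) \<partial>P)"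
    by (intro nn_integral_mono ind)
  also have "\<dots> = ennreal ((1/t) ^ A) * (\<integral>\<^sup>+h. (\<Prod>i<n. ennreal (t ^ h i)) \<partial>P)"
    by (rule nn_integral_cmult) simp
  also have "\<dots> \<le> ennreal ((1/t) ^ A) * ennreal ((1 / (2 - t)) ^ n)"
  proof (rule mult_left_mono)
    have "(\<integral>\<^sup>+h. (\<Prod>i<n. ennreal (t ^ h i)) \<partial>P) = (\<Prod>i<n. \<integral>\<^sup>+k. ennreal (t ^ k) \<partial>hirb_height_pmf \<beta> H)"
      unfolding P_def hirb_heights_pmf_def by (rule nn_integral_prod_Pi_pmf) simp
    also have "\<dots> \<le> (\<Prod>i<n. ennreal (1 / (2 - t)))"
      by (intro prod_mono_ennreal height_mgf assms t)
    also have "\<dots> = ennreal ((1 / (2 - t)) ^ n)"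
      using t by (simp add: ennreal_power)
    finally show "(\<integral>\<^sup>+h. (\<Prod>i<n. ennreal (t ^ h i)) \<partial>P) \<le> ennreal ((1 / (2 - t)) ^ n)" .
  qed simp
  also have "\<dots> = ennreal ((1/t) ^ A * (1 / (2 - t)) ^ n)"
    using t by (simp add: ennreal_mult')
  finally have em: "emeasure P E \<le> ennreal ((1/t) ^ A * (1 / (2 - t)) ^ n)" .
  have "measure P E \<le> (1/t) ^ A * (1 / (2 - t)) ^ n"
    using em t by (simp add: measure_pmf.emeasure_eq_measure ennreal_le_iff)
  also have "\<dots> = (7/8) ^ (m - 1) * ((7/8) ^ (4 * n) * (7/6) ^ n)"
    unfolding A_def t_def by (simp add: power_add)
  also have "(7/8::real) ^ (4 * n) * (7/6) ^ n = ((7/8) ^ 4 * (7/6)) ^ n"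
    by (simp only: power_mult power_mult_distrib)
  also have "(7/8::real) ^ 4 * (7/6) = 16807/24576" by (simp add: power_divide)
  also have "(7/8) ^ (m - 1) * (16807/24576::real) ^ n \<le> (7/8) ^ (m - 1) * (16807/24576)"
  proof -
    have "(16807/24576::real) ^ n \<le> (16807/24576) ^ 1"
      by (intro power_decreasing) (use assms in auto)
    thus ?thesis by (intro mult_left_mono) auto
  qed
  also have "\<dots> < 0.883 ^ (m - 1) * 0.883"
    by (intro mult_le_less_imp_less power_mono) auto
  also have "\<dots> = 0.883 ^ m" using assms(5)
    by (metis Suc_diff_1 less_le_trans zero_less_one power_Suc2)
  finally show ?thesis unfolding P_def E_def .
qed

end
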